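(* Let $\pi_1\in\mathcal{T}_k$ and $\pi_2\in\mathcal{T}_\ell$ be two-stack sortable permutations. Then $D(C_1(\pi_1,\pi_2))=(\pi_1,\pi_2)$, and $D(C_2(\pi_1,\pi_2,i))=(\pi_1,\pi_2)$ for every $1\le i\le\operatorname{slmax}(\pi_2)$.
   Context: For a finite sequence $A$ of distinct integers, the stack-sorting operator $\mathcal{S}$ is defined by $\mathcal{S}(\epsilon)=\epsilon$ for the empty sequence and, if $A$ is non-empty with largest element $m$, writing $A=A_L\cdot(m)\cdot A_R$ (concatenation), $\mathcal{S}(A)=\mathcal{S}(A_L)\cdot\mathcal{S}(A_R)\cdot(m)$. For $n\ge1$, $\mathcal{T}_n$ is the set of two-stack sortable permutations $\sigma\in\mathfrak{S}_n$, i.e. with $\mathcal{S}(\mathcal{S}(\sigma))$ the identity. For a sequence $A$ of distinct integers, $P(A)$ is the permutation with the same relative order as $A$. For a sequence $\tau$: $\tau^{+k}$ adds $k$ to each element; for $k_1<k_2$, $\tau^{+(k_1,m,k_2)}$ adds $k_1$ to elements strictly smaller than $m$ and $k_2$ to the others. $\operatorname{slmax}(\sigma)$ is the number of left-to-right maxima of $\mathcal{S}(\sigma)$; if $a_1,\dots,a_t$ are their values in order, define $C_1(\pi_1,\pi_2)=\pi_1\cdot(k+\ell+1)\cdot\pi_2^{+k}$ and $C_2(\pi_1,\pi_2,i)=\pi_1^{+(0,k,a_i)}\cdot(k+\ell+1)\cdot\pi_2^{+(k-1,a_i+1,k)}$ (with $a_i$ taken from $\mathcal{S}(\pi_2)$).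 For a permutation $\pi$ of length $n\ge1$ written $\pi=\pi_\ell\cdot(n)\cdot\pi_r$ (parts before and after the entry $n$), $D(\pi)=(P(\pi_\ell),P(\pi_r))$. *)

theory Defs
  imports Main "HOL-Combinatorics.Multiset_Permutations"
begin

(* Sequences of distinct integers are represented as lists of naturals
   (all sequences in the statement have positive entries);
   a permutation of [n] is an element of permutations_of_set {1..n}. *)

lemma takeWhile_neq_shorter:
  "m \<in> set xs \<Longrightarrow> length (takeWhile (\<lambda>x. x \<noteq> m) xs) < length xs"
  by (induction xs) auto

lemma tl_dropWhile_shorter:
  "xs \<noteq> [] \<Longrightarrow> length (tl (dropWhile P xs)) < length xs"
proof -
  assume "xs \<noteq> []"
  moreover have "length (dropWhile P xs) \<le> length xs" by (rule length_dropWhile_le)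
  ultimately show ?thesis by (cases xs) auto
qed

function stack_sort :: "nat list \<Rightarrow> nat list" where
  "stack_sort [] = []"
| "stack_sort (x # xs) =
     (let m = Max (set (x # xs));
          L = takeWhile (\<lambda>y. y \<noteq> m) (x # xs);
          R = tl (dropWhile (\<lambda>y. y \<noteq> m) (x # xs))
      in stack_sort L @ stack_sort R @ [m])"
  by pat_completeness auto
termination
proof (relation "measure length")
  show "wf (measure length)" by simp
next
  fix x :: nat and xs m L
  assume "m = Max (set (x # xs))" "L = takeWhile (\<lambda>y. y \<noteq> m) (x # xs)"
  moreover have "m \<in> set (x # xs)" using \<open>m = _\<close> Max_in[of "set (x # xs)"] by (simp only: List.finite_set) simp
  ultimately show "(L, x # xs) \<in> measure length"
    using takeWhile_neq_shorter[of m "x # xs"] by (simp only: in_measure)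
next
  fix x :: nat and xs m R
  assume "R = tl (dropWhile (\<lambda>y. y \<noteq> m) (x # xs))"
  then show "(R, x # xs) \<in> measure length"
    using tl_dropWhile_shorter[of "x # xs" "\<lambda>y. y \<noteq> m"] by (simp only: in_measure list.simps(3) not_False_eq_True)
qed

definition two_stack_sortable :: "nat \<Rightarrow> nat list set" where
  "two_stack_sortable n =
     {\<sigma> \<in> permutations_of_set {1..n}. stack_sort (stack_sort \<sigma>) = [1..<n+1]}"

definition std :: "nat list \<Rightarrow> nat list" where
  "std A = map (\<lambda>a. card {b \<in> set A. b \<le> a}) A"

definition shift :: "nat \<Rightarrow> nat list \<Rightarrow> nat list" where
  "shift k \<tau> = map (\<lambda>x. x + k) \<tau>"

definition shift3 :: "nat \<Rightarrow> nat \<Rightarrow> nat \<Rightarrow> nat list \<Rightarrow> nat list" where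
  "shift3 k1 m k2 \<tau> = map (\<lambda>x. if x < m then x + k1 else x + k2) \<tau>"

definition lr_maxima :: "nat list \<Rightarrow> nat list" where
  "lr_maxima xs = [xs ! i. i \<leftarrow> [0..<length xs], \<forall>j<i. xs ! j < xs ! i]"

definition slmax :: "nat list \<Rightarrow> nat" where
  "slmax \<sigma> = length (lr_maxima (stack_sort \<sigma>))"

definition slmax_val :: "nat list \<Rightarrow> nat \<Rightarrow> nat" where
  "slmax_val \<pi> i = lr_maxima (stack_sort \<pi>) ! (i - 1)"

definition C1 :: "nat list \<Rightarrow> nat list \<Rightarrow> nat list" where
  "C1 \<pi>1 \<pi>2 = (let k = length \<pi>1; l = length \<pi>2
                 in \<pi>1 @ [k + l + 1] @ shift k \<pi>2)"

definition C2 :: "nat list \<Rightarrow> nat list \<Rightarrow> nat \<Rightarrow> nat list" where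
  "C2 \<pi>1 \<pi>2 i = (let k = length \<pi>1; l = length \<pi>2; a = slmax_val \<pi>2 i
                   in shift3 0 k a \<pi>1 @ [k + l + 1] @ shift3 (k - 1) (a + 1) k \<pi>2)"

definition D :: "nat list \<Rightarrow> nat list \<times> nat list" where
  "D \<pi> = (let n = length \<pi>
          in (std (takeWhile (\<lambda>x. x \<noteq> n) \<pi>), std (tl (dropWhile (\<lambda>x. x \<noteq> n) \<pi>))))"

end

theory Submission
  imports Defs
begin

lemma set_stack_sort: "set (stack_sort xs) = set xs"
proof (induction xs rule: stack_sort.induct)
  case 1 then show ?case by simp
next
  case (2 x xs)
  define m where "m = Max (set (x # xs))"
  have mi: "m \<in> set (x # xs)" unfolding m_def by (intro Max_in) auto
  define T where "T = takeWhile (\<lambda>y. y \<noteq> m) (x # xs)"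
  define Dr where "Dr = dropWhile (\<lambda>y. y \<noteq> m) (x # xs)"
  have ne: "Dr \<noteq> []" using mi unfolding Dr_def by (auto simp: dropWhile_eq_Nil_conv)
  have hd: "hd Dr = m" using hd_dropWhile[of "\<lambda>y. y \<noteq> m" "x # xs"] ne unfolding Dr_def by simp
  have dr: "set Dr = {m} \<union> set (tl Dr)" using ne hd by (cases Dr) auto
  have "set (x # xs) = set T \<union> set Dr"
    using takeWhile_dropWhile_id[of "\<lambda>y. y \<noteq> m" "x # xs"] unfolding T_def Dr_def
    by (metis set_append)
  hence "set (x # xs) = set T \<union> {m} \<union> set (tl Dr)" using dr by blast
  moreover have "stack_sort (x # xs) = stack_sort T @ stack_sort (tl Dr) @ [m]"
    unfolding T_def Dr_def m_def by (simp only: stack_sort.simps Let_def)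
  ultimately show ?case using 2(1)[OF m_def T_def] 2(2)[OF m_def refl] unfolding Dr_def[symmetric] by auto
qed

lemma std_id:
  assumes "distinct xs" "set xs = {1..n}"
  shows "std xs = xs"
proof -
  have "\<And>a. a \<in> set xs \<Longrightarrow> card {b \<in> set xs. b \<le> a} = a"
  proof -
    fix a assume "a \<in> set xs"
    hence "a \<ge> 1" "a \<le> n" using assms by auto
    hence "{b \<in> set xs. b \<le> a} = {1..a}" using assms by auto
    thus "card {b \<in> set xs. b \<le> a} = a" by simp
  qed
  thus ?thesis unfolding std_def by (simp add: map_idI)
qed

lemma std_map:
  assumes "strict_mono_on (set xs) f"
  shows "std (map f xs) = std xs"
proof -
  have inj: "inj_on f (set xs)" using assms by (rule strict_mono_on_imp_inj_on)
  have "\<And>a. a \<in> set xs \<Longrightarrow> card {b \<in> f ` set xs. b \<le> f a} = card {b \<in> set xs. b \<le> a}"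
  proof -
    fix a assume a: "a \<in> set xs"
    have "{b \<in> f ` set xs. b \<le> f a} = f ` {b \<in> set xs. b \<le> a}"
    proof safe
      fix b assume b: "b \<in> set xs" "f b \<le> f a"
      have "b \<le> a"
      proof (rule ccontr)
        assume "\<not> b \<le> a" hence "a < b" by simp
        hence "f a < f b" using assms a b unfolding strict_mono_on_def by blast
        thus False using b by simp
      qed
      thus "f b \<in> f ` {b \<in> set xs. b \<le> a}" using b by auto
    next
      fix b assume b: "b \<in> set xs" "b \<le> a"
      show "f b \<le> f a"
      proof (cases "b = a")
        case False hence "b < a" using b by simp
        thus ?thesis using assms a b unfolding strict_mono_on_def by (meson less_imp_le)
      qed simp
    qed auto
    also have "card \<dots> = card {b \<in> set xs. b \<le> a}"
      by (rule card_image) (rule inj_on_subset[OF inj], auto)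
    finally show "card {b \<in> f ` set xs. b \<le> f a} = card {b \<in> set xs. b \<le> a}" .
  qed
  thus ?thesis unfolding std_def by simp
qed

lemma split_at:
  assumes "m \<notin> set A"
  shows "takeWhile (\<lambda>x. x \<noteq> m) (A @ [m] @ B) = A"
    "tl (dropWhile (\<lambda>x. x \<noteq> m) (A @ [m] @ B)) = B"
  using assms by (induction A) auto

theorem proposition7:
  fixes \<pi>1 \<pi>2 :: "nat list" and k l :: nat
  assumes "1 \<le> k" and "1 \<le> l"
    and "\<pi>1 \<in> two_stack_sortable k" and "\<pi>2 \<in> two_stack_sortable l"
  shows "D (C1 \<pi>1 \<pi>2) = (\<pi>1, \<pi>2)
         \<and> (\<forall>i. 1 \<le> i \<and> i \<le> slmax \<pi>2 \<longrightarrow> D (C2 \<pi>1 \<pi>2 i) = (\<pi>1, \<pi>2))"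
proof -
  have p1: "distinct \<pi>1" "set \<pi>1 = {1..k}" "length \<pi>1 = k"
    using assms(3) unfolding two_stack_sortable_def
    by (auto dest: permutations_of_setD simp: length_finite_permutations_of_set)
  have p2: "distinct \<pi>2" "set \<pi>2 = {1..l}" "length \<pi>2 = l"
    using assms(4) unfolding two_stack_sortable_def
    by (auto dest: permutations_of_setD simp: length_finite_permutations_of_set)
  have s1: "std \<pi>1 = \<pi>1" using p1 std_id by blast
  have s2: "std \<pi>2 = \<pi>2" using p2 std_id by blast
  have part1: "D (C1 \<pi>1 \<pi>2) = (\<pi>1, \<pi>2)"
  proof -
    have "k + l + 1 \<notin> set \<pi>1" using p1 by auto
    moreover have "std (shift k \<pi>2) = \<pi>2" unfolding shift_def
      by (subst std_map) (auto simp: strict_mono_on_def s2)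
    ultimately show ?thesis unfolding D_def C1_def using p1 p2 split_at[of "k+l+1" \<pi>1] s1
      by (simp add: Let_def shift_def)
  qed
  have part2: "D (C2 \<pi>1 \<pi>2 i) = (\<pi>1, \<pi>2)" if i: "1 \<le> i" "i \<le> slmax \<pi>2" for i
  proof -
    define a where "a = slmax_val \<pi>2 i"
    have "a \<in> set (lr_maxima (stack_sort \<pi>2))"
      using i unfolding a_def slmax_val_def slmax_def by simp
    hence "a \<in> set (stack_sort \<pi>2)" unfolding lr_maxima_def by auto
    hence a: "a \<in> {1..l}" using p2 set_stack_sort by simp
    have n1: "k + l + 1 \<notin> set (shift3 0 k a \<pi>1)" using p1 a unfolding shift3_def by auto
    have st1: "std (shift3 0 k a \<pi>1) = \<pi>1" unfolding shift3_def
      by (subst std_map) (auto simp: strict_mono_on_def s1)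
    have st2: "std (shift3 (k - 1) (a + 1) k \<pi>2) = \<pi>2" unfolding shift3_def
      using assms(1) by (subst std_map) (auto simp: strict_mono_on_def s2)
    have len: "length (C2 \<pi>1 \<pi>2 i) = k + l + 1"
      unfolding C2_def shift3_def using p1 p2 by (simp add: Let_def)
    show ?thesis unfolding D_def len
      unfolding C2_def Let_def a_def[symmetric] p1(3) p2(3)
      using split_at[OF n1] st1 st2 by simp
  qed
  show ?thesis using part1 part2 by blast
qed

end
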